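(* Let $\mathcal{D}$ be a distribution supported on $(0,1]$ with mean $\mu$. Fix $n,m$, a preference profile $\sigma$, and $\epsilon,\delta>0$, and let $T=\frac{2\log(2m/\delta)}{\mu^2\epsilon^2}$. Draw $T$ independent batches of $nm$ i.i.d. samples from $\mathcal{D}$. In batch $t$, give each voter $i$ her own $m$ samples, and let $Y^{i,t}_r$ denote the $r$-th largest of them. For each alternative $j$, letting $r^j_i$ be the position of $j$ in voter $i$'s ranking, define $$\hat\mu_j=\frac1T\sum_{t=1}^T\frac{\sum_{i=1}^n Y^{i,t}_{r^j_i}}{\max_{k\in A}\sum_{i=1}^n Y^{i,t}_{r^k_i}},$$ and let $j_{\mathrm{samp}}\in\arg\max_j\hat\mu_j$. Then with probability at least $1-\delta$ (over the samples), $$\mathbb{E}[\mathrm{dist}(j_{\mathrm{samp}},\sigma)]\ge(1-\epsilon)\max_{j\in A}\mathbb{E}[\mathrm{dist}(j,\sigma)].$$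
   Context: There are $n$ voters and $m$ alternatives $A=\{1,\dots,m\}$. A preference profile $\sigma$ consists of a ranking of $A$ for each voter; position $1$ is the top. Given $\mathcal{D}$ and $\sigma$, a random utility profile $u$ consistent with $\sigma$ is generated as follows: independently for each voter $i$, draw $m$ i.i.d. samples from $\mathcal{D}$ and assign them, from highest to lowest, to the alternatives in the order of voter $i$'s ranking. The social welfare of $j$ is $\mathrm{sw}(j,u)=\sum_i u_{ij}$, and the distortion of $j$ at $\sigma$ is the random variable $\mathrm{dist}(j,\sigma)=\mathrm{sw}(j,u)/\max_{k\in A}\mathrm{sw}(k,u)$; $\mathbb{E}[\mathrm{dist}(j,\sigma)]$ is the expectation over a fresh such $u$ (for fixed $j_{\mathrm{samp}}$). *)

theory Defs
  imports "HOL-Probability.Probability"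
begin

text \<open>Voters are 0..n-1, alternatives 0..m-1. A preference profile is given by
  positions: sigma i j is the (0-based) position of alternative j in voter i's
  ranking (position 0 = top).\<close>

definition is_profile :: "nat \<Rightarrow> nat \<Rightarrow> (nat \<Rightarrow> nat \<Rightarrow> nat) \<Rightarrow> bool" where
  "is_profile n m \<sigma> \<longleftrightarrow> (\<forall>i<n. bij_betw (\<sigma> i) {..<m} {..<m})"

definition kth_largest :: "nat \<Rightarrow> (nat \<Rightarrow> real) \<Rightarrow> nat \<Rightarrow> real" where
  "kth_largest m v r = rev (sort (map v [0..<m])) ! r"

text \<open>A batch of samples s (i,k), i<n, k<m; voter i's own samples are s (i,k), k<m.
  The induced utility of voter i for alternative j is the sample of rank sigma i j.\<close>
definition util :: "nat \<Rightarrow> (nat \<Rightarrow> nat \<Rightarrow> nat) \<Rightarrow> (nat \<times> nat \<Rightarrow> real) \<Rightarrow> nat \<Rightarrow> nat \<Rightarrow> real" where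
  "util m \<sigma> s i j = kth_largest m (\<lambda>k. s (i, k)) (\<sigma> i j)"

definition sw :: "nat \<Rightarrow> nat \<Rightarrow> (nat \<Rightarrow> nat \<Rightarrow> nat) \<Rightarrow> nat \<Rightarrow> (nat \<times> nat \<Rightarrow> real) \<Rightarrow> real" where
  "sw n m \<sigma> j s = (\<Sum>i<n. util m \<sigma> s i j)"

definition distortion :: "nat \<Rightarrow> nat \<Rightarrow> (nat \<Rightarrow> nat \<Rightarrow> nat) \<Rightarrow> nat \<Rightarrow> (nat \<times> nat \<Rightarrow> real) \<Rightarrow> real" where
  "distortion n m \<sigma> j s = sw n m \<sigma> j s / Max ((\<lambda>k. sw n m \<sigma> k s) ` {..<m})"

definition batch_measure :: "real measure \<Rightarrow> nat \<Rightarrow> nat \<Rightarrow> (nat \<times> nat \<Rightarrow> real) measure" where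
  "batch_measure D n m = PiM ({..<n} \<times> {..<m}) (\<lambda>_. D)"

definition expected_dist :: "real measure \<Rightarrow> nat \<Rightarrow> nat \<Rightarrow> (nat \<Rightarrow> nat \<Rightarrow> nat) \<Rightarrow> nat \<Rightarrow> real" where
  "expected_dist D n m \<sigma> j = (\<integral>s. distortion n m \<sigma> j s \<partial>batch_measure D n m)"

definition sample_measure :: "real measure \<Rightarrow> nat \<Rightarrow> nat \<Rightarrow> nat \<Rightarrow> (nat \<Rightarrow> nat \<times> nat \<Rightarrow> real) measure" where
  "sample_measure D n m T = PiM {..<T} (\<lambda>_. batch_measure D n m)"

definition mu_hat :: "nat \<Rightarrow> nat \<Rightarrow> (nat \<Rightarrow> nat \<Rightarrow> nat) \<Rightarrow> nat \<Rightarrow> nat \<Rightarrow> (nat \<Rightarrow> nat \<times> nat \<Rightarrow> real) \<Rightarrow> real" where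
  "mu_hat n m \<sigma> T j \<omega> = (1 / real T) * (\<Sum>t<T. distortion n m \<sigma> j (\<omega> t))"

end

theory Submission imports Defs begin


lemma insort_key_cong:
  assumes "\<forall>a\<in>insert x (set ys). \<forall>b\<in>insert x (set ys). (v a \<le> (v b::real)) = (w a \<le> (w b::real))"
  shows "insort_key v x ys = insort_key w x ys"
  using assms by (induction ys) auto

lemma sort_key_cong:
  assumes "\<forall>a\<in>set xs. \<forall>b\<in>set xs. (v a \<le> (v b::real)) = (w a \<le> (w b::real))"
  shows "sort_key v xs = sort_key w xs"
  using assms
proof (induction xs)
  case Nil then show ?case by simp
next
  case (Cons x xs)
  have "sort_key v xs = sort_key w xs" using Cons by auto
  moreover have "insort_key v x (sort_key w xs) = insort_key w x (sort_key w xs)"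
    by (rule insort_key_cong) (use Cons.prems in auto)
  ultimately show ?case by simp
qed

lemma kth_eq:
  assumes "r < m"
  shows "kth_largest m v r = v (rev (sort_key v [0..<m]) ! r)"
proof -
  have "kth_largest m v r = rev (map v (sort_key v [0..<m])) ! r"
    unfolding kth_largest_def
    by (subst properties_for_sort[of "map v (sort_key v [0..<m])"]) (simp_all add: mset_map)
  also have "\<dots> = v (rev (sort_key v [0..<m]) ! r)"
    using assms by (simp add: rev_map length_sort)
  finally show ?thesis .
qed

lemma kth_measurable:
  fixes f :: "nat \<Rightarrow> 'a \<Rightarrow> real"
  assumes meas: "\<And>k. k < m \<Longrightarrow> f k \<in> borel_measurable M" and r: "r < m"
  shows "(\<lambda>x. kth_largest m (\<lambda>k. f k x) r) \<in> borel_measurable M"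
proof -
  define g where "g x = rev (sort_key (\<lambda>k. f k x) [0..<m])" for x
  define Rel where "Rel x = {(a,b). a < m \<and> b < m \<and> f a x \<le> f b x}" for x
  define h where "h p x = (if r < length p \<and> p ! r < m then f (p ! r) x else 0)" for p :: "nat list" and x
  have eq: "kth_largest m (\<lambda>k. f k x) r = h (g x) x" for x
  proof -
    have "r < length (g x)" using r by (simp add: g_def)
    then have "g x ! r \<in> set (g x)" by (rule nth_mem)
    then have "g x ! r < m" by (simp add: g_def)
    then show ?thesis using r by (simp add: kth_eq g_def h_def)
  qed
  have gcong: "g x = g y" if "Rel x = Rel y" for x y
  proof -
    have "\<forall>a\<in>set [0..<m]. \<forall>b\<in>set [0..<m]. (f a x \<le> f b x) = (f a y \<le> f b y)"
    proof (intro ballI)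
      fix a b assume "a \<in> set [0..<m]" "b \<in> set [0..<m]"
      then have "((a,b) \<in> Rel x) = ((a,b) \<in> Rel y)" using that by simp
      then show "(f a x \<le> f b x) = (f a y \<le> f b y)" using \<open>a \<in> set [0..<m]\<close> \<open>b \<in> set [0..<m]\<close>
        by (simp add: Rel_def)
    qed
    then show ?thesis unfolding g_def by (simp add: sort_key_cong)
  qed
  have g_meas: "g \<in> measurable M (count_space UNIV)"
  proof (subst measurable_count_space_eq2_countable, intro conjI ballI)
    fix p :: "nat list"
    let ?P = "Pow ({..<m} \<times> {..<m}) \<inter> {R. \<exists>y\<in>space M. Rel y = R \<and> g y = p}"
    have "g -` {p} \<inter> space M = (\<Union>R\<in>?P. {x\<in>space M. Rel x = R})"
    proof (intro equalityI subsetI)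
      fix x assume "x \<in> g -` {p} \<inter> space M"
      then show "x \<in> (\<Union>R\<in>?P. {x\<in>space M. Rel x = R})"
        by (auto simp: Rel_def)
    next
      fix x assume "x \<in> (\<Union>R\<in>?P. {x\<in>space M. Rel x = R})"
      then obtain y where "y \<in> space M" "Rel y = Rel x" "g y = p" "x \<in> space M" by auto
      then show "x \<in> g -` {p} \<inter> space M" using gcong[of y x] by simp
    qed
    also have "\<dots> \<in> sets M"
    proof (intro sets.finite_UN)
      show "finite ?P" by (intro finite_Int disjI1) simp
      fix R assume "R \<in> ?P"
      then have RS: "R \<subseteq> {..<m} \<times> {..<m}" by auto
      have "{x\<in>space M. Rel x = R} = {x\<in>space M. \<forall>a<m. \<forall>b<m. (f a x \<le> f b x) = ((a,b) \<in> R)}"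
        using RS by (auto simp: Rel_def set_eq_iff)
      also have "\<dots> \<in> sets M"
        using meas by measurable
      finally show "{x\<in>space M. Rel x = R} \<in> sets M" .
    qed
    finally show "g -` {p} \<inter> space M \<in> sets M" .
  qed auto
  have "(\<lambda>x. h (g x) x) \<in> borel_measurable M"
  proof (rule measurable_compose_countable'[OF _ g_meas])
    fix p :: "nat list"
    show "h p \<in> borel_measurable M"
    proof (cases "r < length p \<and> p ! r < m")
      case True then show ?thesis unfolding h_def using meas by simp
    next
      case False
      then have "h p = (\<lambda>x. 0)" by (auto simp: h_def fun_eq_iff)
      then show ?thesis by simp
    qed
  qed auto
  then show ?thesis unfolding eq .
qed


lemma kth_in:
  assumes "r < m"
  shows "kth_largest m v r \<in> v ` {..<m}"
proof -
  have "r < length (rev (sort_key v [0..<m]))" using assms by simp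
  then have "rev (sort_key v [0..<m]) ! r \<in> set (rev (sort_key v [0..<m]))" by (rule nth_mem)
  then have "rev (sort_key v [0..<m]) ! r < m" by simp
  then show ?thesis using kth_eq[OF assms] by auto
qed

lemma kth_sum: "(\<Sum>r<m. kth_largest m v r) = (\<Sum>k<m. v k)"
proof -
  let ?L = "rev (sort (map v [0..<m]))"
  have "(\<Sum>r<m. kth_largest m v r) = (\<Sum>r<length ?L. ?L ! r)"
    by (simp add: kth_largest_def)
  also have "\<dots> = sum_list ?L"
    by (simp add: sum_list_sum_nth atLeast0LessThan)
  also have "\<dots> = sum_list (map v [0..<m])"
    by (metis mset_rev mset_sort sum_mset_sum_list)
  also have "\<dots> = (\<Sum>k<m. v k)"
    by (simp add: sum_list_sum_nth atLeast0LessThan)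
  finally show ?thesis .
qed

lemma profile_lt:
  assumes "is_profile n m \<sigma>" "i < n" "j < m"
  shows "\<sigma> i j < m"
  using assms unfolding is_profile_def bij_betw_def by auto

lemma sum_sw:
  assumes "is_profile n m \<sigma>"
  shows "(\<Sum>j<m. sw n m \<sigma> j s) = (\<Sum>i<n. \<Sum>k<m. s (i,k))"
proof -
  have "(\<Sum>j<m. sw n m \<sigma> j s) = (\<Sum>i<n. \<Sum>j<m. kth_largest m (\<lambda>k. s (i,k)) (\<sigma> i j))"
    unfolding sw_def util_def by (rule sum.swap)
  also have "\<dots> = (\<Sum>i<n. \<Sum>r<m. kth_largest m (\<lambda>k. s (i,k)) r)"
  proof (rule sum.cong[OF refl])
    fix i assume "i \<in> {..<n}"
    then have "bij_betw (\<sigma> i) {..<m} {..<m}" using assms unfolding is_profile_def by auto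
    then show "(\<Sum>j<m. kth_largest m (\<lambda>k. s (i,k)) (\<sigma> i j)) = (\<Sum>r<m. kth_largest m (\<lambda>k. s (i,k)) r)"
      by (rule sum.reindex_bij_betw)
  qed
  also have "\<dots> = (\<Sum>i<n. \<Sum>k<m. s (i,k))" by (simp add: kth_sum)
  finally show ?thesis .
qed

definition good :: "nat \<Rightarrow> nat \<Rightarrow> (nat \<times> nat \<Rightarrow> real) \<Rightarrow> bool" where
  "good n m s \<longleftrightarrow> (\<forall>i<n. \<forall>k<m. 0 < s (i,k) \<and> s (i,k) \<le> 1)"

lemma util_bounds:
  assumes "good n m s" "is_profile n m \<sigma>" "i < n" "j < m"
  shows "0 < util m \<sigma> s i j \<and> util m \<sigma> s i j \<le> 1"
proof -
  have "util m \<sigma> s i j \<in> (\<lambda>k. s (i,k)) ` {..<m}"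
    unfolding util_def by (rule kth_in) (rule profile_lt[OF assms(2-4)])
  then show ?thesis using assms(1,3) unfolding good_def by auto
qed

lemma sw_bounds:
  assumes "good n m s" "is_profile n m \<sigma>" "j < m" "n \<ge> 1"
  shows "0 < sw n m \<sigma> j s \<and> sw n m \<sigma> j s \<le> real n"
proof -
  have "0 < sw n m \<sigma> j s" unfolding sw_def
    using util_bounds[OF assms(1,2) _ assms(3)] assms(4)
    by (intro sum_pos) (auto simp: lessThan_empty_iff)
  moreover have "sw n m \<sigma> j s \<le> (\<Sum>i<n. 1)" unfolding sw_def
    using util_bounds[OF assms(1,2) _ assms(3)] by (intro sum_mono) auto
  ultimately show ?thesis by simp
qed

lemma Max_sw_bounds:
  assumes "good n m s" "is_profile n m \<sigma>" "j < m" "n \<ge> 1"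
  shows "sw n m \<sigma> j s \<le> Max ((\<lambda>k. sw n m \<sigma> k s) ` {..<m})"
    and "Max ((\<lambda>k. sw n m \<sigma> k s) ` {..<m}) \<le> real n"
proof -
  show "sw n m \<sigma> j s \<le> Max ((\<lambda>k. sw n m \<sigma> k s) ` {..<m})"
    using assms(3) by (intro Max_ge) auto
  show "Max ((\<lambda>k. sw n m \<sigma> k s) ` {..<m}) \<le> real n"
    using assms sw_bounds[OF assms(1,2) _ assms(4)] by (subst Max_le_iff) auto
qed

lemma dist_bounds:
  assumes "good n m s" "is_profile n m \<sigma>" "j < m" "n \<ge> 1"
  shows "0 \<le> distortion n m \<sigma> j s \<and> distortion n m \<sigma> j s \<le> 1"
    and "sw n m \<sigma> j s / real n \<le> distortion n m \<sigma> j s"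
proof -
  note a = sw_bounds[OF assms] Max_sw_bounds[OF assms]
  show "0 \<le> distortion n m \<sigma> j s \<and> distortion n m \<sigma> j s \<le> 1"
    unfolding distortion_def using a by (auto simp: divide_simps)
  show "sw n m \<sigma> j s / real n \<le> distortion n m \<sigma> j s"
    unfolding distortion_def using a by (intro divide_left_mono) auto
qed

lemma sum_dist_ge:
  assumes "good n m s" "is_profile n m \<sigma>" "n \<ge> 1"
  shows "(\<Sum>i<n. \<Sum>k<m. s (i,k)) / real n \<le> (\<Sum>j<m. distortion n m \<sigma> j s)"
proof -
  have "(\<Sum>i<n. \<Sum>k<m. s (i,k)) / real n = (\<Sum>j<m. sw n m \<sigma> j s / real n)"
    using sum_sw[OF assms(2), of s] by (simp only: sum_divide_distrib[symmetric])
  also have "\<dots> \<le> (\<Sum>j<m. distortion n m \<sigma> j s)"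
    using dist_bounds(2)[OF assms(1,2) _ assms(3)] by (intro sum_mono) auto
  finally show ?thesis .
qed



lemma prob_batch: "prob_space D \<Longrightarrow> prob_space (batch_measure D n m)"
  unfolding batch_measure_def by (rule prob_space_PiM)

lemma comp_meas:
  assumes "sets D = sets borel" "i < n" "k < m"
  shows "(\<lambda>s. s (i,k)) \<in> borel_measurable (batch_measure D n m)"
proof -
  have "(\<lambda>s. s (i,k)) \<in> measurable (batch_measure D n m) D"
    unfolding batch_measure_def using assms(2,3) by (intro measurable_component_singleton) auto
  then show ?thesis using measurable_cong_sets[OF refl assms(1)] by blast
qed

lemma AE_comp:
  assumes "prob_space D" "AE x in D. P x" "i < n" "k < m"
  shows "AE s in batch_measure D n m. P (s (i,k))"
  unfolding batch_measure_def
  by (rule AE_PiM_component[where M="\<lambda>_. D"]) (use assms in auto)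

lemma integral_comp:
  assumes "prob_space D" "sets D = sets borel" "i < n" "k < m"
  shows "(\<integral>s. s (i,k) \<partial>batch_measure D n m) = (\<integral>x. x \<partial>D)"
    and "integrable D (\<lambda>x. x) \<Longrightarrow> integrable (batch_measure D n m) (\<lambda>s. s (i,k))"
proof -
  have d: "distr (batch_measure D n m) D (\<lambda>s. s (i,k)) = D"
    unfolding batch_measure_def by (rule distr_PiM_component) (use assms in auto)
  have mD: "(\<lambda>s. s (i,k)) \<in> measurable (batch_measure D n m) D"
    unfolding batch_measure_def using assms(3,4) by (intro measurable_component_singleton) auto
  have id: "(\<lambda>x::real. x) \<in> borel_measurable D"
    by (rule measurable_ident_sets[OF assms(2)])
  show "(\<integral>s. s (i,k) \<partial>batch_measure D n m) = (\<integral>x. x \<partial>D)"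
    using integral_distr[OF mD id] d by simp
  assume "integrable D (\<lambda>x. x)"
  then have "integrable (distr (batch_measure D n m) D (\<lambda>s. s (i,k))) (\<lambda>x. x)" using d by simp
  then show "integrable (batch_measure D n m) (\<lambda>s. s (i,k))"
    using integrable_distr_eq[OF mD id] by simp
qed

lemma indep_components:
  assumes "\<And>i. i \<in> I \<Longrightarrow> prob_space (M i)" "I \<noteq> {}"
  shows "prob_space.indep_vars (PiM I M) M (\<lambda>i \<omega>. \<omega> i) I"
proof -
  interpret P: prob_space "PiM I M" by (rule prob_space_PiM) (use assms in auto)
  show ?thesis
  proof (subst P.indep_vars_iff_distr_eq_PiM')
    show "I \<noteq> {}" by fact
    show "\<And>i. i \<in> I \<Longrightarrow> (\<lambda>\<omega>. \<omega> i) \<in> measurable (PiM I M) (M i)"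
      by (auto intro: measurable_component_singleton)
    have "distr (PiM I M) (PiM I M) (\<lambda>x. \<lambda>i\<in>I. x i) = distr (PiM I M) (PiM I M) (\<lambda>x. x)"
      by (rule distr_cong) (auto simp: space_PiM PiE_def extensional_restrict)
    also have "\<dots> = PiM I M" by (rule distr_id)
    also have "\<dots> = (\<Pi>\<^sub>M i\<in>I. distr (PiM I M) (M i) (\<lambda>\<omega>. \<omega> i))"
      by (rule PiM_cong) (auto simp: distr_PiM_component assms)
    finally show "distr (PiM I M) (\<Pi>\<^sub>M i\<in>I. M i) (\<lambda>x. \<lambda>i\<in>I. x i) =
        (\<Pi>\<^sub>M i\<in>I. distr (PiM I M) (M i) (\<lambda>\<omega>. \<omega> i))" .
  qed
qed

lemma hoeffding_batches:
  fixes B :: "'a measure" and f :: "'a \<Rightarrow> real"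
  assumes B: "prob_space B" and f: "f \<in> borel_measurable B"
    and bnd: "AE s in B. 0 \<le> f s \<and> f s \<le> 1" and T: "T > 0" and e: "e \<ge> 0"
  shows "measure (PiM {..<T} (\<lambda>_. B))
           {\<omega> \<in> space (PiM {..<T} (\<lambda>_. B)). \<bar>(\<Sum>t<T. f (\<omega> t)) - real T * (\<integral>s. f s \<partial>B)\<bar> \<ge> e}
         \<le> 2 * exp (-2 * e^2 / real T)"
proof -
  let ?S = "PiM {..<T} (\<lambda>_. B)"
  interpret S: prob_space ?S by (rule prob_space_PiM) (use B in auto)
  have ind0: "S.indep_vars (\<lambda>_. B) (\<lambda>t \<omega>. \<omega> t) {..<T}"
    by (rule indep_components) (use B T in auto)
  have ind: "S.indep_vars (\<lambda>_. borel) (\<lambda>t \<omega>. f (\<omega> t)) {..<T}"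
    by (rule S.indep_vars_compose2[OF ind0]) (use f in auto)
  have d: "distr ?S B (\<lambda>\<omega>. \<omega> t) = B" if "t < T" for t
    by (rule distr_PiM_component) (use B that in auto)
  have mB: "(\<lambda>\<omega>. \<omega> t) \<in> measurable ?S B" if "t < T" for t
    using that by (intro measurable_component_singleton) auto
  have exp: "S.expectation (\<lambda>\<omega>. f (\<omega> t)) = (\<integral>s. f s \<partial>B)" if "t < T" for t
    using integral_distr[OF mB[OF that] f] d[OF that] by simp
  have AEt: "AE \<omega> in ?S. f (\<omega> t) \<in> {0..1}" if "t < T" for t
    by (rule AE_PiM_component[where M="\<lambda>_. B"]) (use B bnd that in auto)
  interpret H: Hoeffding_ineq ?S "{..<T}" "\<lambda>t \<omega>. f (\<omega> t)" "\<lambda>_. 0" "\<lambda>_. 1" "real T * (\<integral>s. f s \<partial>B)"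
    by unfold_locales (use ind AEt exp in auto)
  have "(\<Sum>i<T. (1 - 0 :: real)\<^sup>2) > 0" using T by simp
  from H.Hoeffding_ineq_abs_ge[OF e this] show ?thesis by simp
qed



theorem theorem10:
  fixes D :: "real measure" and n m T :: nat and \<sigma> :: "nat \<Rightarrow> nat \<Rightarrow> nat"
    and \<epsilon> \<delta> \<mu> :: real
  assumes "prob_space D" and "sets D = sets borel"
    and "AE x in D. 0 < x \<and> x \<le> 1"
    and "\<mu> = (\<integral>x. x \<partial>D)"
    and "n \<ge> 1" and "m \<ge> 1"
    and "is_profile n m \<sigma>"
    and "\<epsilon> > 0" and "\<delta> > 0"
    and "T = nat \<lceil>2 * ln (2 * real m / \<delta>) / (\<mu>^2 * \<epsilon>^2)\<rceil>"
  shows "measure (sample_measure D n m T)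
           {\<omega> \<in> space (sample_measure D n m T).
              \<forall>j<m. (\<forall>k<m. mu_hat n m \<sigma> T k \<omega> \<le> mu_hat n m \<sigma> T j \<omega>) \<longrightarrow>
                 expected_dist D n m \<sigma> j \<ge>
                   (1 - \<epsilon>) * Max ((\<lambda>k. expected_dist D n m \<sigma> k) ` {..<m})}
         \<ge> 1 - \<delta>"
proof (cases "\<delta> \<ge> 1")
  case True
  then show ?thesis using measure_nonneg[of "sample_measure D n m T"] by (smt (verit))
next
  case False
  note D = assms(1) and setsD = assms(2) and AED = assms(3) and mu_def = assms(4)
  note n1 = assms(5) and m1 = assms(6) and prof = assms(7) and eps = assms(8) and del = assms(9)
  note T_def = assms(10)
  define B where "B = batch_measure D n m"
  define S where "S = sample_measure D n m T"
  have S_eq: "S = PiM {..<T} (\<lambda>_. B)" unfolding S_def sample_measure_def B_def ..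
  interpret D: prob_space D by (rule D)
  have probB: "prob_space B" unfolding B_def by (rule prob_batch[OF D])
  interpret B: prob_space B by (rule probB)
  interpret S: prob_space S unfolding S_eq by (rule prob_space_PiM) (use probB in auto)
  have idD: "(\<lambda>x::real. x) \<in> borel_measurable D" by (rule measurable_ident_sets[OF setsD])
  have intD: "integrable D (\<lambda>x. x)"
  proof -
    interpret I: interval_bounded_random_variable D "\<lambda>x. x" 0 1
      by unfold_locales (use idD AED in \<open>auto elim: eventually_mono\<close>)
    show ?thesis by (rule I.integrable)
  qed
  have mu_pos: "\<mu> > 0"
  proof -
    have AE0: "AE x in D. 0 \<le> x" using AED by (auto elim: eventually_mono)
    have "\<mu> \<ge> 0" unfolding mu_def by (rule integral_nonneg_AE[OF AE0])
    moreover have "\<mu> \<noteq> 0"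
    proof
      assume "\<mu> = 0"
      then have "AE x in D. x = 0" using integral_nonneg_eq_0_iff_AE[OF intD AE0] mu_def by simp
      with AED have "AE x in D. False" by eventually_elim auto
      then show False by simp
    qed
    ultimately show ?thesis by simp
  qed
  have AEgood: "AE s in B. good n m s"
  proof -
    have "AE s in B. \<forall>p\<in>{..<n}\<times>{..<m}. 0 < s p \<and> s p \<le> 1"
    proof (rule AE_finite_allI)
      fix p assume "p \<in> {..<n}\<times>{..<m}"
      then obtain i k where p: "p = (i,k)" "i < n" "k < m" by auto
      show "AE s in B. 0 < s p \<and> s p \<le> 1"
        unfolding p(1) B_def using AE_comp[OF D AED p(2,3)] by simp
    qed simp
    then show ?thesis by (rule eventually_mono) (auto simp: good_def)
  qed
  have umeas: "(\<lambda>s. util m \<sigma> s i k) \<in> borel_measurable B" if "i < n" "k < m" for i k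
    unfolding util_def B_def
    by (rule kth_measurable[OF _ profile_lt[OF prof that]]) (rule comp_meas[OF setsD that(1)])
  have swmeas: "(\<lambda>s. sw n m \<sigma> k s) \<in> borel_measurable B" if "k < m" for k
    unfolding sw_def using umeas that by (intro borel_measurable_sum) auto
  have dmeas: "distortion n m \<sigma> j \<in> borel_measurable B" if "j < m" for j
  proof -
    have "(\<lambda>s. Max ((\<lambda>k. sw n m \<sigma> k s) ` {..<m})) \<in> borel_measurable B"
      using swmeas by (intro borel_measurable_Max) auto
    then have "(\<lambda>s. sw n m \<sigma> j s / Max ((\<lambda>k. sw n m \<sigma> k s) ` {..<m})) \<in> borel_measurable B"
      using swmeas[OF that] by (intro borel_measurable_divide) auto
    then show ?thesis unfolding distortion_def[abs_def] by simp
  qed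
  have dbnd: "AE s in B. 0 \<le> distortion n m \<sigma> j s \<and> distortion n m \<sigma> j s \<le> 1" if "j < m" for j
    using AEgood by (rule eventually_mono) (use dist_bounds(1)[OF _ prof that n1] in auto)
  have dint: "integrable B (distortion n m \<sigma> j)" if "j < m" for j
  proof -
    interpret I: interval_bounded_random_variable B "distortion n m \<sigma> j" 0 1
      by unfold_locales (use dmeas[OF that] dbnd[OF that] in \<open>auto elim: eventually_mono\<close>)
    show ?thesis by (rule I.integrable)
  qed
  define E where "E j = expected_dist D n m \<sigma> j" for j
  have E_eq: "E j = (\<integral>s. distortion n m \<sigma> j s \<partial>B)" for j
    unfolding E_def expected_dist_def B_def ..
  define Mx where "Mx = Max (E ` {..<m})"
  have fin_ne: "finite {..<m}" "{..<m} \<noteq> {}" using m1 by (auto simp: lessThan_empty_iff)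
  have E_le: "E j \<le> Mx" if "j < m" for j unfolding Mx_def using that by (intro Max_ge) auto
  have maxE: "\<mu> \<le> Mx"
  proof -
    have cint: "integrable B (\<lambda>s. s (i,k))" if "i < n" "k < m" for i k
      unfolding B_def by (rule integral_comp(2)[OF D setsD that intD])
    have cI: "(\<integral>s. s (i,k) \<partial>B) = \<mu>" if "i < n" "k < m" for i k
      unfolding B_def mu_def by (rule integral_comp(1)[OF D setsD that])
    have "(\<integral>s. (\<Sum>i<n. \<Sum>k<m. s (i,k)) \<partial>B) = (\<Sum>i<n. (\<integral>s. (\<Sum>k<m. s (i,k)) \<partial>B))"
      using cint by (subst Bochner_Integration.integral_sum) auto
    also have "\<dots> = (\<Sum>i<n. \<Sum>k<m. (\<integral>s. s (i,k) \<partial>B))"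
    proof (intro sum.cong refl)
      fix i assume "i \<in> {..<n}"
      then show "(\<integral>s. (\<Sum>k<m. s (i,k)) \<partial>B) = (\<Sum>k<m. (\<integral>s. s (i,k) \<partial>B))"
        using cint by (subst Bochner_Integration.integral_sum) auto
    qed
    also have "\<dots> = (\<Sum>i<n. \<Sum>k<m. \<mu>)"
      by (intro sum.cong refl) (use cI in auto)
    finally have "(\<integral>s. (\<Sum>i<n. \<Sum>k<m. s (i,k)) \<partial>B) = real n * (real m * \<mu>)" by simp
    then have "real m * \<mu> = (\<integral>s. (\<Sum>i<n. \<Sum>k<m. s (i,k)) / real n \<partial>B)"
      using n1 by simp
    also have "\<dots> \<le> (\<integral>s. (\<Sum>j<m. distortion n m \<sigma> j s) \<partial>B)"
    proof (rule integral_mono_AE)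
      show "integrable B (\<lambda>s. (\<Sum>i<n. \<Sum>k<m. s (i,k)) / real n)"
        by (rule integrable_divide_zero, rule Bochner_Integration.integrable_sum, rule Bochner_Integration.integrable_sum) (use cint in auto)
      show "integrable B (\<lambda>s. \<Sum>j<m. distortion n m \<sigma> j s)"
        by (intro Bochner_Integration.integrable_sum) (auto intro: dint)
      show "AE s in B. (\<Sum>i<n. \<Sum>k<m. s (i,k)) / real n \<le> (\<Sum>j<m. distortion n m \<sigma> j s)"
        using AEgood by (rule eventually_mono) (rule sum_dist_ge[OF _ prof n1])
    qed
    also have "\<dots> = (\<Sum>j<m. E j)" unfolding E_eq using dint by (simp add: Bochner_Integration.integral_sum)
    also have "\<dots> \<le> (\<Sum>j<m. Mx)" using E_le by (intro sum_mono) auto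
    also have "\<dots> = real m * Mx" by simp
    finally show ?thesis using m1 by simp
  qed
  have Tge: "2 * ln (2 * real m / \<delta>) / (\<mu>^2 * \<epsilon>^2) \<le> real T"
    unfolding T_def by (rule real_nat_ceiling_ge)
  have lnpos: "ln (2 * real m / \<delta>) > 0"
    using False m1 del by (intro ln_gt_zero) (simp add: field_simps)
  have me_pos: "\<mu>^2 * \<epsilon>^2 > 0" using mu_pos eps by simp
  have xpos: "2 * ln (2 * real m / \<delta>) / (\<mu>^2 * \<epsilon>^2) > 0"
    using lnpos me_pos by simp
  have Tpos: "T > 0" using Tge xpos by linarith
  have lnle: "ln (2 * real m / \<delta>) \<le> real T * \<mu>^2 * \<epsilon>^2 / 2"
    using Tge me_pos by (simp add: pos_divide_le_eq mult_ac)
  define t0 where "t0 = \<mu> * \<epsilon> / 2"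
  have t0pos: "t0 > 0" unfolding t0_def using mu_pos eps by simp
  define X where "X j \<omega> = (\<Sum>t<T. distortion n m \<sigma> j (\<omega> t))" for j \<omega>
  define bad where "bad j = {\<omega> \<in> space S. \<bar>X j \<omega> - real T * E j\<bar> \<ge> real T * t0}" for j
  have Xmeas: "X j \<in> borel_measurable S" if "j < m" for j
  proof -
    have [measurable]: "distortion n m \<sigma> j \<in> borel_measurable B" using dmeas that .
    show ?thesis unfolding X_def[abs_def] S_eq by measurable
  qed
  have bad_meas: "bad j \<in> sets S" if "j < m" for j
  proof -
    have [measurable]: "X j \<in> borel_measurable S" using Xmeas that .
    show ?thesis unfolding bad_def by measurable
  qed
  have bad_le: "measure S (bad j) \<le> \<delta> / real m" if "j < m" for j
  proof -
    have "measure S (bad j) \<le> 2 * exp (-2 * (real T * t0)^2 / real T)"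
      using hoeffding_batches[OF probB dmeas[OF that] dbnd[OF that] Tpos, of "real T * t0"] t0pos
      unfolding bad_def X_def S_eq E_eq by simp
    also have "-2 * (real T * t0)^2 / real T = - (real T * \<mu>^2 * \<epsilon>^2 / 2)"
      using Tpos unfolding t0_def by (simp add: power2_eq_square field_simps)
    also have "2 * exp (- (real T * \<mu>^2 * \<epsilon>^2 / 2)) \<le> 2 * exp (- ln (2 * real m / \<delta>))"
      using lnle by simp
    also have "exp (- ln (2 * real m / \<delta>)) = \<delta> / (2 * real m)"
      using m1 del by (simp add: exp_minus)
    finally show ?thesis using m1 by simp
  qed
  have UN_meas: "(\<Union>j<m. bad j) \<in> sets S" using bad_meas by auto
  have "measure S (\<Union>j<m. bad j) \<le> (\<Sum>j<m. measure S (bad j))"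
    by (rule measure_UNION_le) (use bad_meas in auto)
  also have "\<dots> \<le> (\<Sum>j<m. \<delta> / real m)" using bad_le by (intro sum_mono) auto
  also have "\<dots> = \<delta>" using m1 by simp
  finally have UN_le: "measure S (\<Union>j<m. bad j) \<le> \<delta>" .
  define G where "G = space S - (\<Union>j<m. bad j)"
  have G_ge: "measure S G \<ge> 1 - \<delta>"
    unfolding G_def using S.prob_compl[OF UN_meas] UN_le by simp
  have mh_meas: "(\<lambda>\<omega>. mu_hat n m \<sigma> T k \<omega>) \<in> borel_measurable S" if "k < m" for k
  proof -
    have [measurable]: "X k \<in> borel_measurable S" using Xmeas that .
    have "(\<lambda>\<omega>. mu_hat n m \<sigma> T k \<omega>) = (\<lambda>\<omega>. (1 / real T) * X k \<omega>)"
      unfolding mu_hat_def X_def by simp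
    also have "\<dots> \<in> borel_measurable S" by measurable
    finally show ?thesis .
  qed
  let ?tgt = "{\<omega> \<in> space S. \<forall>j<m. (\<forall>k<m. mu_hat n m \<sigma> T k \<omega> \<le> mu_hat n m \<sigma> T j \<omega>) \<longrightarrow>
                 expected_dist D n m \<sigma> j \<ge> (1 - \<epsilon>) * Max ((\<lambda>k. expected_dist D n m \<sigma> k) ` {..<m})}"
  have tgt_eq: "?tgt = {\<omega> \<in> space S. \<forall>j\<in>{..<m}. (\<forall>k\<in>{..<m}. mu_hat n m \<sigma> T k \<omega> \<le> mu_hat n m \<sigma> T j \<omega>) \<longrightarrow>
                 expected_dist D n m \<sigma> j \<ge> (1 - \<epsilon>) * Max ((\<lambda>k. expected_dist D n m \<sigma> k) ` {..<m})}"
    by auto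
  have tgt_meas: "?tgt \<in> sets S"
    unfolding tgt_eq
  proof (intro sets.sets_Collect_finite_All sets.sets_Collect_imp sets.sets_Collect_const finite_lessThan)
    fix j k assume j: "j \<in> {..<m}" and k: "k \<in> {..<m}"
    have [measurable]: "(\<lambda>\<omega>. mu_hat n m \<sigma> T k \<omega>) \<in> borel_measurable S" using mh_meas k by simp
    have [measurable]: "(\<lambda>\<omega>. mu_hat n m \<sigma> T j \<omega>) \<in> borel_measurable S" using mh_meas j by simp
    show "{\<omega> \<in> space S. mu_hat n m \<sigma> T k \<omega> \<le> mu_hat n m \<sigma> T j \<omega>} \<in> sets S" by measurable
  qed
  have G_sub: "G \<subseteq> ?tgt"
  proof
    fix \<omega> assume "\<omega> \<in> G"
    then have sp: "\<omega> \<in> space S" and nb: "\<And>j. j < m \<Longrightarrow> \<omega> \<notin> bad j" unfolding G_def by auto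
    have close: "\<bar>mu_hat n m \<sigma> T j \<omega> - E j\<bar> < t0" if "j < m" for j
    proof -
      have "\<bar>X j \<omega> - real T * E j\<bar> < real T * t0" using nb[OF that] sp unfolding bad_def by auto
      moreover have "mu_hat n m \<sigma> T j \<omega> - E j = (X j \<omega> - real T * E j) / real T"
        using Tpos unfolding mu_hat_def X_def by (simp add: field_simps)
      ultimately show ?thesis using Tpos by (simp add: abs_div pos_divide_less_eq mult_ac)
    qed
    obtain js where js: "js < m" "E js = Mx"
    proof -
      have "Mx \<in> E ` {..<m}" unfolding Mx_def using fin_ne by (intro Max_in) auto
      then show ?thesis using that by auto
    qed
    have MxE: "Max ((\<lambda>k. expected_dist D n m \<sigma> k) ` {..<m}) = Mx" unfolding Mx_def E_def ..
    show "\<omega> \<in> ?tgt"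
    proof (intro CollectI conjI allI impI sp)
      fix j assume j: "j < m" and mx: "\<forall>k<m. mu_hat n m \<sigma> T k \<omega> \<le> mu_hat n m \<sigma> T j \<omega>"
      have "mu_hat n m \<sigma> T js \<omega> \<le> mu_hat n m \<sigma> T j \<omega>" using mx js by auto
      moreover have "\<bar>mu_hat n m \<sigma> T j \<omega> - E j\<bar> < t0" using close j .
      moreover have "\<bar>mu_hat n m \<sigma> T js \<omega> - E js\<bar> < t0" using close[OF js(1)] .
      ultimately have "E j > Mx - 2 * t0" using js by linarith
      moreover have "2 * t0 \<le> \<epsilon> * Mx" unfolding t0_def using maxE eps by simp
      ultimately have "E j \<ge> (1 - \<epsilon>) * Mx" by (simp add: algebra_simps)
      then show "expected_dist D n m \<sigma> j \<ge> (1 - \<epsilon>) * Max ((\<lambda>k. expected_dist D n m \<sigma> k) ` {..<m})"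
        unfolding MxE E_def .
    qed
  qed
  have "measure S G \<le> measure S ?tgt" by (rule S.finite_measure_mono[OF G_sub tgt_meas])
  then show ?thesis using G_ge unfolding S_def by simp
qed

end
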